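(* Let $\Sigma=(X,U,F)$ be a system, $Q\subset X$ a controlled invariant set, and $V\subset U$ a finite cover of $Q$. Then $h_{inv}(Q)\le\log\rho(M_{Q,V})$, where $\rho$ denotes the spectral radius.
   Context: A system is a triple $\Sigma=(X,U,F)$ where $X,U$ are nonempty sets and $F:X\times U\rightrightarrows X$ is a set-valued map with $F(x,u)\neq\emptyset$ for all $(x,u)$; for $A\subset X$, $F(A,u)=\bigcup_{x\in A}F(x,u)$. $Q\subset X$ is controlled invariant if for every $x\in Q$ there is $u\in U$ with $F(x,u)\subset Q$. For $u\in U$ put $Q_u=\{x\in Q:F(x,u)\subset Q\}$. Elements of $U^n$ are written $\omega=\omega_0\cdots\omega_{n-1}$, $\omega_{[0,i]}=\omega_0\cdots\omega_i$. A set $S\subset U^n$ is an admissible family of length $n$ for $Q$ if (a) $\omega'_0=\omega''_0$ for all $\omega',\omega''\in S$, and (b) there exists $x\in Q$ such that for every $\omega\in S$, with $I^0_\omega(x)=\{x\}$: for all $i=0,\dots,n-2$, $F(I^i_\omega(x),\omega_i)\subset\bigcup_{\omega'\in S,\ \omega'_{[0,i]}=\omega_{[0,i]}}Q_{\omega'_{i+1}}$ and $I^{i+1}_\omega(x):=F(I^i_\omega(x),\omega_i)\cap Q_{\omega_{i+1}}\neq\emptyset$; and $I^n_\omega(x):=F(I^{n-1}_\omega(x),\omega_{n-1})\subset Q$. Let $AF^n(Q)$ be the set of such families and $Q_S$ the set of $x\in Q$ satisfying (b). A set $\mathscr{S}\subset U^n$ is $(n,Q)$-spanning if $Q\subset\bigcup_{S\subset\mathscr{S},\,S\in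 AF^n(Q)}Q_S$; $r_{inv}(n,Q)$ is the infimum of $\sharp\mathscr{S}$ over such sets, and $h_{inv}(Q)=\limsup_{n\to\infty}\frac1n\log r_{inv}(n,Q)$ ($\log$ base $2$). A set $V\subset U$ is a cover of $Q$ if $Q\subset\bigcup_{a\in V}Q_a$. The admissible matrix $M_{Q,V}=(M_{ab})_{a,b\in V}$ has $M_{ab}=1$ if there exists $x\in Q_a$ with $F(x,a)\cap Q_b\neq\emptyset$, and $M_{ab}=0$ otherwise. *)

theory Defs
  imports "Jordan_Normal_Form.Spectral_Radius" "HOL-Library.Extended_Real"
    "HOL-Library.Extended_Nat" "HOL-Library.Liminf_Limsup"
begin

text \<open>A system (X,U,F): states of type 'x (X = UNIV), controls of type 'u (U = UNIV),
  F :: 'x => 'u => 'x set, required to be nonempty-valued (see is_system).\<close>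

definition is_system :: "('x \<Rightarrow> 'u \<Rightarrow> 'x set) \<Rightarrow> bool" where
  "is_system F \<longleftrightarrow> (\<forall>x u. F x u \<noteq> {})"

definition Fimg :: "('x \<Rightarrow> 'u \<Rightarrow> 'x set) \<Rightarrow> 'x set \<Rightarrow> 'u \<Rightarrow> 'x set" where
  "Fimg F A u = (\<Union>x\<in>A. F x u)"

definition controlled_invariant :: "('x \<Rightarrow> 'u \<Rightarrow> 'x set) \<Rightarrow> 'x set \<Rightarrow> bool" where
  "controlled_invariant F Q \<longleftrightarrow> (\<forall>x\<in>Q. \<exists>u. F x u \<subseteq> Q)"

definition Qu :: "('x \<Rightarrow> 'u \<Rightarrow> 'x set) \<Rightarrow> 'x set \<Rightarrow> 'u \<Rightarrow> 'x set" where
  "Qu F Q u = {x\<in>Q. F x u \<subseteq> Q}"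

text \<open>The sets I^i_w(x) for i = 0,...,n-1 (words w are lists of length n,
  w ! i = w_i).\<close>
fun Iset :: "('x \<Rightarrow> 'u \<Rightarrow> 'x set) \<Rightarrow> 'x set \<Rightarrow> 'u list \<Rightarrow> 'x \<Rightarrow> nat \<Rightarrow> 'x set" where
  "Iset F Q w x 0 = {x}"
| "Iset F Q w x (Suc i) = Fimg F (Iset F Q w x i) (w ! i) \<inter> Qu F Q (w ! Suc i)"

definition adm_point :: "('x \<Rightarrow> 'u \<Rightarrow> 'x set) \<Rightarrow> 'x set \<Rightarrow> nat \<Rightarrow> 'u list set \<Rightarrow> 'x \<Rightarrow> bool" where
  "adm_point F Q n S x \<longleftrightarrow> x \<in> Q \<and>
     (\<forall>w\<in>S.
        (\<forall>i < n - 1.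
           Fimg F (Iset F Q w x i) (w ! i)
             \<subseteq> (\<Union>w'\<in>{w'\<in>S. take (Suc i) w' = take (Suc i) w}. Qu F Q (w' ! Suc i))
           \<and> Iset F Q w x (Suc i) \<noteq> {})
        \<and> Fimg F (Iset F Q w x (n - 1)) (w ! (n - 1)) \<subseteq> Q)"

definition admissible_family :: "('x \<Rightarrow> 'u \<Rightarrow> 'x set) \<Rightarrow> 'x set \<Rightarrow> nat \<Rightarrow> 'u list set \<Rightarrow> bool" where
  "admissible_family F Q n S \<longleftrightarrow> 0 < n \<and> S \<noteq> {} \<and> (\<forall>w\<in>S. length w = n) \<and>
     (\<forall>w'\<in>S. \<forall>w''\<in>S. w' ! 0 = w'' ! 0) \<and> (\<exists>x. adm_point F Q n S x)"

definition QS :: "('x \<Rightarrow> 'u \<Rightarrow> 'x set) \<Rightarrow> 'x set \<Rightarrow> nat \<Rightarrow> 'u list set \<Rightarrow> 'x set" where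
  "QS F Q n S = {x. adm_point F Q n S x}"

definition spanning :: "('x \<Rightarrow> 'u \<Rightarrow> 'x set) \<Rightarrow> 'x set \<Rightarrow> nat \<Rightarrow> 'u list set \<Rightarrow> bool" where
  "spanning F Q n SS \<longleftrightarrow> (\<forall>w\<in>SS. length w = n) \<and>
     Q \<subseteq> (\<Union>S\<in>{S. S \<subseteq> SS \<and> admissible_family F Q n S}. QS F Q n S)"

definition r_inv :: "('x \<Rightarrow> 'u \<Rightarrow> 'x set) \<Rightarrow> nat \<Rightarrow> 'x set \<Rightarrow> enat" where
  "r_inv F n Q = Inf {(if finite SS then enat (card SS) else \<infinity>) | SS. spanning F Q n SS}"

definition elog2 :: "enat \<Rightarrow> ereal" where
  "elog2 k = (case k of \<infinity> \<Rightarrow> \<infinity> | enat m \<Rightarrow> (if m = 0 then -\<infinity> else ereal (log 2 (real m))))"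

definition rlog2 :: "real \<Rightarrow> ereal" where
  "rlog2 r = (if r = 0 then -\<infinity> else ereal (log 2 r))"

definition h_inv :: "('x \<Rightarrow> 'u \<Rightarrow> 'x set) \<Rightarrow> 'x set \<Rightarrow> ereal" where
  "h_inv F Q = limsup (\<lambda>n. ereal (1 / real n) * elog2 (r_inv F n Q))"

definition is_cover :: "('x \<Rightarrow> 'u \<Rightarrow> 'x set) \<Rightarrow> 'x set \<Rightarrow> 'u set \<Rightarrow> bool" where
  "is_cover F Q V \<longleftrightarrow> Q \<subseteq> (\<Union>a\<in>V. Qu F Q a)"

definition adm_entry :: "('x \<Rightarrow> 'u \<Rightarrow> 'x set) \<Rightarrow> 'x set \<Rightarrow> 'u \<Rightarrow> 'u \<Rightarrow> complex" where
  "adm_entry F Q a b = (if \<exists>x\<in>Qu F Q a. F x a \<inter> Qu F Q b \<noteq> {} then 1 else 0)"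

text \<open>M_{Q,V} as a (card V x card V) matrix, via an arbitrary enumeration of V
  (the spectral radius does not depend on the enumeration).\<close>
definition adm_matrix :: "('x \<Rightarrow> 'u \<Rightarrow> 'x set) \<Rightarrow> 'x set \<Rightarrow> 'u set \<Rightarrow> complex mat" where
  "adm_matrix F Q V =
     (let e = (SOME e. bij_betw e {..<card V} V)
      in mat (card V) (card V) (\<lambda>(i, j). adm_entry F Q (e i) (e j)))"

end

theory Submission
  imports Defs "HOL-Real_Asymp.Real_Asymp"
begin

lemma smult_pow_mat:
  assumes A: "(A :: complex mat) \<in> carrier_mat k k"
  shows "(c \<cdot>\<^sub>m A) ^\<^sub>m m = (c ^ m) \<cdot>\<^sub>m (A ^\<^sub>m m)"
proof (induction m)
  case 0
  then show ?case using A by (auto intro!: eq_matI)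
next
  case (Suc m)
  have "(c \<cdot>\<^sub>m A) ^\<^sub>m Suc m = ((c ^ m) \<cdot>\<^sub>m (A ^\<^sub>m m)) * (c \<cdot>\<^sub>m A)" using Suc by simp
  also have "\<dots> = (c ^ Suc m) \<cdot>\<^sub>m (A ^\<^sub>m Suc m)"
    using A by (auto intro!: eq_matI simp: mult_smult_assoc_mat mult_smult_distrib)
  finally show ?case .
qed

lemma scaled_radius:
  assumes A: "(A :: complex mat) \<in> carrier_mat k k" and k: "k > 0" and r: "r > 0"
    and sr: "spectral_radius A \<le> r"
  shows "spectral_radius (complex_of_real (1/r) \<cdot>\<^sub>m A) \<le> 1"
proof -
  let ?B = "complex_of_real (1/r) \<cdot>\<^sub>m A"
  have B: "?B \<in> carrier_mat k k" using A by auto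
  from spectral_radius_mem_max(1)[OF B k] obtain ev where ev: "ev \<in> spectrum ?B"
    and eq: "spectral_radius ?B = norm ev" by auto
  from ev obtain v where v: "v \<in> carrier_vec k" "v \<noteq> 0\<^sub>v k" "?B *\<^sub>v v = ev \<cdot>\<^sub>v v"
    unfolding spectrum_def eigenvalue_def eigenvector_def using A by auto
  have "A *\<^sub>v v = (complex_of_real r * ev) \<cdot>\<^sub>v v"
  proof (rule eq_vecI)
    fix i assume i: "i < dim_vec ((complex_of_real r * ev) \<cdot>\<^sub>v v)"
    hence ik: "i < k" using v by auto
    have "(?B *\<^sub>v v) $ i = (ev \<cdot>\<^sub>v v) $ i" using v by simp
    hence "complex_of_real (1/r) * (row A i \<bullet> v) = ev * v $ i"
      using A v ik by (simp add: row_smult)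
    hence "row A i \<bullet> v = complex_of_real r * ev * v $ i" using r
      by (simp add: field_simps)
    then show "(A *\<^sub>v v) $ i = ((complex_of_real r * ev) \<cdot>\<^sub>v v) $ i" using A v ik by simp
  qed (use A v in auto)
  hence "eigenvalue A (complex_of_real r * ev)"
    unfolding eigenvalue_def eigenvector_def using A v by auto
  hence "norm (complex_of_real r * ev) \<le> spectral_radius A"
    using spectral_radius_mem_max(2)[OF A k] unfolding spectrum_def by auto
  moreover have "norm (complex_of_real r * ev) = r * norm ev" using r by (simp add: norm_mult)
  ultimately have "r * norm ev \<le> r * 1" using sr by linarith
  hence "norm ev \<le> 1" using r mult_le_cancel_left_pos by blast
  thus ?thesis using eq by simp
qed

lemma mat_pow_bound:
  assumes A: "(A :: complex mat) \<in> carrier_mat k k" and k: "k > 0" and r: "r > 0"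
    and sr: "spectral_radius A \<le> r"
  shows "\<exists>c1 c2. \<forall>m i j. i < k \<longrightarrow> j < k \<longrightarrow> norm ((A ^\<^sub>m m) $$ (i,j)) \<le> r ^ m * (c1 + c2 * real m ^ (k - 1))"
proof -
  let ?B = "complex_of_real (1/r) \<cdot>\<^sub>m A"
  have B: "?B \<in> carrier_mat k k" using A by auto
  from spectral_radius_jnf_norm_bound_le_1_upper_triangular[OF B scaled_radius[OF A k r sr]]
  obtain c1 c2 where cc: "\<And>m. norm_bound (?B ^\<^sub>m m) (c1 + c2 * of_nat m ^ (k - 1))" by auto
  show ?thesis
  proof (intro exI allI impI)
    fix m i j assume ij: "i < k" "j < k"
    have "norm ((?B ^\<^sub>m m) $$ (i,j)) \<le> c1 + c2 * of_nat m ^ (k - 1)"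
      using cc[of m] ij A unfolding norm_bound_def by auto
    moreover have "(?B ^\<^sub>m m) $$ (i,j) = complex_of_real ((1/r)^m) * (A ^\<^sub>m m) $$ (i,j)"
      using smult_pow_mat[OF A] ij A by simp
    ultimately have "(1/r)^m * norm ((A ^\<^sub>m m) $$ (i,j)) \<le> c1 + c2 * of_nat m ^ (k - 1)"
      using r by (simp add: norm_mult norm_power norm_divide)
    thus "norm ((A ^\<^sub>m m) $$ (i,j)) \<le> r ^ m * (c1 + c2 * real m ^ (k - 1))"
      using r by (simp add: field_simps)
  qed
qed

definition adj :: "('x \<Rightarrow> 'u \<Rightarrow> 'x set) \<Rightarrow> 'x set \<Rightarrow> 'u \<Rightarrow> 'u \<Rightarrow> bool" where
  "adj F Q a b \<longleftrightarrow> (\<exists>x\<in>Qu F Q a. F x a \<inter> Qu F Q b \<noteq> {})"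

definition walks :: "('x \<Rightarrow> 'u \<Rightarrow> 'x set) \<Rightarrow> 'x set \<Rightarrow> 'u set \<Rightarrow> nat \<Rightarrow> 'u list set" where
  "walks F Q V n = {w. length w = n \<and> set w \<subseteq> V \<and> (\<forall>i. Suc i < n \<longrightarrow> adj F Q (w ! i) (w ! Suc i))}"

definition wab :: "('x \<Rightarrow> 'u \<Rightarrow> 'x set) \<Rightarrow> 'x set \<Rightarrow> 'u set \<Rightarrow> nat \<Rightarrow> 'u \<Rightarrow> 'u \<Rightarrow> 'u list set" where
  "wab F Q V m a b = {w \<in> walks F Q V (Suc m). w ! 0 = a \<and> w ! m = b}"

fun cnt :: "(nat \<Rightarrow> nat \<Rightarrow> nat) \<Rightarrow> nat \<Rightarrow> nat \<Rightarrow> nat \<Rightarrow> nat \<Rightarrow> nat" where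
  "cnt M k 0 i j = (if i = j then 1 else 0)"
| "cnt M k (Suc m) i j = (\<Sum>l<k. cnt M k m i l * M l j)"

lemma finite_walks: "finite V \<Longrightarrow> finite (walks F Q V n)"
  by (rule finite_subset[OF _ finite_lists_length_eq[of V n]]) (auto simp: walks_def)

lemma finite_wab: "finite V \<Longrightarrow> finite (wab F Q V m a b)"
  unfolding wab_def using finite_walks[of V F Q "Suc m"] by auto

lemma cnt_mat:
  assumes "A = mat k k (\<lambda>(i,j). if M i j = 1 then (1::complex) else 0)"
    and M01: "\<And>i j. M i j \<le> 1"
  shows "i < k \<Longrightarrow> j < k \<Longrightarrow> (A ^\<^sub>m m) $$ (i,j) = of_nat (cnt M k m i j)"
proof (induction m arbitrary: j)
  case 0
  then show ?case using assms by simp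
next
  case (Suc m)
  have A: "A \<in> carrier_mat k k" using assms by simp
  have "(A ^\<^sub>m Suc m) $$ (i,j) = row (A ^\<^sub>m m) i \<bullet> col A j" using Suc A by simp
  also have "\<dots> = (\<Sum>l<k. (A ^\<^sub>m m) $$ (i,l) * A $$ (l,j))"
    using Suc A unfolding scalar_prod_def by (auto simp: lessThan_atLeast0 intro!: sum.cong)
  also have "\<dots> = (\<Sum>l<k. of_nat (cnt M k m i l) * of_nat (M l j))"
  proof (rule sum.cong)
    fix l assume l: "l \<in> {..<k}"
    have "M l j = 0 \<or> M l j = 1" using M01[of l j] by auto
    then show "(A ^\<^sub>m m) $$ (i,l) * A $$ (l,j) = of_nat (cnt M k m i l) * of_nat (M l j)"
      using Suc l assms by auto
  qed simp
  also have "\<dots> = of_nat (cnt M k (Suc m) i j)" by simp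
  finally show ?case .
qed

lemma card_wab:
  assumes V: "finite V" and e: "bij_betw e {..<k} V"
    and M: "\<And>l j. M l j = (if adj F Q (e l) (e j) then 1 else 0)"
  shows "i < k \<Longrightarrow> j < k \<Longrightarrow> card (wab F Q V m (e i) (e j)) \<le> cnt M k m i j"
proof (induction m arbitrary: j)
  case 0
  have "wab F Q V 0 (e i) (e j) \<subseteq> (if i = j then {[e i]} else {})"
  proof
    fix w assume w: "w \<in> wab F Q V 0 (e i) (e j)"
    then obtain c where "w = [c]" unfolding wab_def walks_def by (auto simp: length_Suc_conv)
    with w have "w = [e i]" "e i = e j" unfolding wab_def by auto
    moreover have "i = j" using \<open>e i = e j\<close> e 0 unfolding bij_betw_def inj_on_def by auto
    ultimately show "w \<in> (if i = j then {[e i]} else {})" by simp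
  qed
  hence "card (wab F Q V 0 (e i) (e j)) \<le> card (if i = j then {[e i]} else {})"
    by (intro card_mono) simp_all
  then show ?case by (cases "i = j") simp_all
next
  case (Suc m)
  let ?L = "{l. l < k \<and> adj F Q (e l) (e j)}"
  have sub: "wab F Q V (Suc m) (e i) (e j) \<subseteq> (\<Union>l\<in>?L. (\<lambda>w. w @ [e j]) ` wab F Q V m (e i) (e l))"
  proof
    fix w assume w: "w \<in> wab F Q V (Suc m) (e i) (e j)"
    hence len: "length w = Suc (Suc m)" and sV: "set w \<subseteq> V" and w0: "w ! 0 = e i" and wm: "w ! Suc m = e j"
      and ad: "\<And>i. Suc i < Suc (Suc m) \<Longrightarrow> adj F Q (w ! i) (w ! Suc i)"
      unfolding wab_def walks_def by auto
    have "w ! m \<in> V" using sV len nth_mem[of m w] by auto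
    then obtain l where l: "l < k" "e l = w ! m" using e unfolding bij_betw_def by auto
    have wdec: "w = butlast w @ [e j]"
      using len wm by (metis append_butlast_last_id last_conv_nth list.size(3) nat.simps(3) diff_Suc_1)
    have bl: "butlast w \<in> wab F Q V m (e i) (e l)"
      unfolding wab_def walks_def using len sV w0 l ad
      by (auto simp: nth_butlast dest: in_set_butlastD)
    have "l \<in> ?L" using l ad[of m] wm by auto
    then show "w \<in> (\<Union>l\<in>?L. (\<lambda>w. w @ [e j]) ` wab F Q V m (e i) (e l))"
      using bl wdec by blast
  qed
  have fin: "finite ?L" by simp
  have "card (wab F Q V (Suc m) (e i) (e j)) \<le> card (\<Union>l\<in>?L. (\<lambda>w. w @ [e j]) ` wab F Q V m (e i) (e l))"
    by (rule card_mono[OF _ sub]) (intro finite_UN_I fin finite_imageI finite_wab[OF V])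
  also have "\<dots> \<le> (\<Sum>l\<in>?L. card ((\<lambda>w. w @ [e j]) ` wab F Q V m (e i) (e l)))"
    by (rule card_UN_le[OF fin])
  also have "\<dots> \<le> (\<Sum>l\<in>?L. cnt M k m i l)"
  proof (rule sum_mono)
    fix l assume l: "l \<in> ?L"
    have "card ((\<lambda>w. w @ [e j]) ` wab F Q V m (e i) (e l)) \<le> card (wab F Q V m (e i) (e l))"
      by (rule card_image_le[OF finite_wab[OF V]])
    also have "\<dots> \<le> cnt M k m i l" by (rule Suc.IH) (use l Suc.prems in auto)
    finally show "card ((\<lambda>w. w @ [e j]) ` wab F Q V m (e i) (e l)) \<le> cnt M k m i l" .
  qed
  also have "\<dots> = (\<Sum>l<k. cnt M k m i l * M l j)"
  proof -
    have Lr: "?L = {l \<in> {..<k}. adj F Q (e l) (e j)}" by auto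
    have "(\<Sum>l\<in>?L. cnt M k m i l) = (\<Sum>l<k. if adj F Q (e l) (e j) then cnt M k m i l else 0)"
      by (simp only: Lr sum.inter_filter[OF finite_lessThan])
    also have "\<dots> = (\<Sum>l<k. cnt M k m i l * M l j)" by (intro sum.cong) (auto simp: M)
    finally show ?thesis .
  qed
  finally show ?case by simp
qed

lemma card_walks:
  assumes V: "finite V" and e: "bij_betw e {..<k} V"
    and M: "\<And>l j. M l j = (if adj F Q (e l) (e j) then 1 else 0)"
  shows "card (walks F Q V (Suc m)) \<le> (\<Sum>i<k. \<Sum>j<k. cnt M k m i j)"
proof -
  have sub: "walks F Q V (Suc m) \<subseteq> (\<Union>i<k. \<Union>j<k. wab F Q V m (e i) (e j))"
  proof
    fix w assume w: "w \<in> walks F Q V (Suc m)"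
    hence "w ! 0 \<in> V" "w ! m \<in> V" unfolding walks_def using nth_mem[of 0 w] nth_mem[of m w] by auto
    then obtain i j where "i < k" "j < k" "e i = w ! 0" "e j = w ! m"
      using e unfolding bij_betw_def by (metis imageE lessThan_iff)
    hence "w \<in> wab F Q V m (e i) (e j)" using w unfolding wab_def by simp
    thus "w \<in> (\<Union>i<k. \<Union>j<k. wab F Q V m (e i) (e j))" using \<open>i < k\<close> \<open>j < k\<close> by blast
  qed
  have "card (walks F Q V (Suc m)) \<le> card (\<Union>i<k. \<Union>j<k. wab F Q V m (e i) (e j))"
    by (rule card_mono[OF _ sub]) (use finite_wab[OF V] in auto)
  also have "\<dots> \<le> (\<Sum>i<k. card (\<Union>j<k. wab F Q V m (e i) (e j)))" by (rule card_UN_le) simp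
  also have "\<dots> \<le> (\<Sum>i<k. \<Sum>j<k. card (wab F Q V m (e i) (e j)))"
    by (intro sum_mono card_UN_le) simp
  also have "\<dots> \<le> (\<Sum>i<k. \<Sum>j<k. cnt M k m i j)"
    by (intro sum_mono card_wab[OF V e M]) auto
  finally show ?thesis .
qed

lemma Iset_prefix:
  "take (Suc i) w = take (Suc i) w' \<Longrightarrow> Iset F Q w x i = Iset F Q w' x i"
proof (induction i)
  case 0 then show ?case by simp
next
  case (Suc i)
  have t: "take (Suc i) w = take (Suc i) w'"
    using Suc.prems by (metis take_take min.absorb1 le_SucI order_refl)
  have a: "w ! i = w' ! i" using Suc.prems by (metis nth_take lessI less_SucI)
  have b: "w ! Suc i = w' ! Suc i" using Suc.prems by (metis nth_take lessI)
  show ?case using Suc.IH[OF t] a b by simp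
qed

lemma Iset_sub:
  "x \<in> Qu F Q (w ! 0) \<Longrightarrow> Iset F Q w x i \<subseteq> Qu F Q (w ! i)"
  by (induction i) auto

lemma Iset_ne_mono:
  "Iset F Q w x j \<noteq> {} \<Longrightarrow> i \<le> j \<Longrightarrow> Iset F Q w x i \<noteq> {}"
proof (induction j)
  case 0 then show ?case by simp
next
  case (Suc j)
  have "Iset F Q w x j \<noteq> {}" using Suc.prems(1) by (auto simp: Fimg_def)
  then show ?case using Suc by (cases "i = Suc j") auto
qed

lemma extend:
  assumes sys: "is_system F" and cov: "is_cover F Q V"
  shows "length w = Suc j \<Longrightarrow> set w \<subseteq> V \<Longrightarrow> x \<in> Qu F Q (w ! 0) \<Longrightarrow> Iset F Q w x j \<noteq> {} \<Longrightarrow>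
    \<exists>w'. length w' = Suc j + k \<and> take (Suc j) w' = w \<and> set w' \<subseteq> V \<and> Iset F Q w' x (j + k) \<noteq> {}"
proof (induction k arbitrary: w j)
  case 0
  then show ?case by (intro exI[of _ w]) auto
next
  case (Suc k)
  from Suc.prems(4) obtain z where z: "z \<in> Iset F Q w x j" by auto
  have zQ: "z \<in> Qu F Q (w ! j)" using Iset_sub[OF Suc.prems(3)] z by auto
  from sys obtain y where y: "y \<in> F z (w ! j)" unfolding is_system_def by blast
  have yQ: "y \<in> Q" using zQ y unfolding Qu_def by auto
  with cov obtain b where b: "b \<in> V" "y \<in> Qu F Q b" unfolding is_cover_def by auto
  define w1 where "w1 = w @ [b]"
  have tw1: "take (Suc j) w1 = w" using Suc.prems(1) unfolding w1_def by simp
  have I1: "Iset F Q w1 x j = Iset F Q w x j"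
    by (rule Iset_prefix) (use tw1 Suc.prems(1) in simp)
  have n1: "w1 ! j = w ! j" "w1 ! Suc j = b" using Suc.prems(1) unfolding w1_def by (auto simp: nth_append)
  have "y \<in> Iset F Q w1 x (Suc j)" using I1 n1 z y b by (auto simp: Fimg_def)
  hence ne: "Iset F Q w1 x (Suc j) \<noteq> {}" by auto
  have l1: "length w1 = Suc (Suc j)" using Suc.prems(1) unfolding w1_def by simp
  have s1: "set w1 \<subseteq> V" using Suc.prems(2) b unfolding w1_def by auto
  have x1: "x \<in> Qu F Q (w1 ! 0)" using Suc.prems(3) Suc.prems(1) unfolding w1_def by (simp add: nth_append)
  from Suc.IH[OF l1 s1 x1 ne] obtain w' where w': "length w' = Suc (Suc j) + k"
    "take (Suc (Suc j)) w' = w1" "set w' \<subseteq> V" "Iset F Q w' x (Suc j + k) \<noteq> {}" by auto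
  have "take (Suc j) w' = w" using w'(2) tw1 by (metis take_take min.absorb1 le_SucI order_refl)
  then show ?case using w' by (intro exI[of _ w']) simp
qed

lemma spanning_walks:
  assumes sys: "is_system F" and cov: "is_cover F Q V" and n: "0 < n"
  shows "spanning F Q n (walks F Q V n)"
  unfolding spanning_def
proof (intro conjI)
  show "\<forall>w\<in>walks F Q V n. length w = n" unfolding walks_def by auto
  show "Q \<subseteq> (\<Union>S\<in>{S. S \<subseteq> walks F Q V n \<and> admissible_family F Q n S}. QS F Q n S)"
  proof
    fix x assume xQ: "x \<in> Q"
    with cov obtain a where a: "a \<in> V" "x \<in> Qu F Q a" unfolding is_cover_def by auto
    define S where "S = {w. length w = n \<and> set w \<subseteq> V \<and> w ! 0 = a \<and> Iset F Q w x (n - 1) \<noteq> {}}"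
    have xw: "\<And>w. w \<in> S \<Longrightarrow> x \<in> Qu F Q (w ! 0)" using a unfolding S_def by auto
    have SW: "S \<subseteq> walks F Q V n"
    proof
      fix w assume w: "w \<in> S"
      have "adj F Q (w ! i) (w ! Suc i)" if i: "Suc i < n" for i
      proof -
        have wn: "Iset F Q w x (n - 1) \<noteq> {}" using w unfolding S_def by simp
        have "Suc i \<le> n - 1" using i by simp
        from Iset_ne_mono[OF wn this] have "Iset F Q w x (Suc i) \<noteq> {}" .
        then obtain z where "z \<in> Iset F Q w x (Suc i)" by auto
        then obtain y where y: "y \<in> Iset F Q w x i" "z \<in> F y (w ! i)" "z \<in> Qu F Q (w ! Suc i)"
          by (auto simp: Fimg_def)
        have "y \<in> Qu F Q (w ! i)" using Iset_sub[OF xw[OF w]] y by auto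
        thus ?thesis unfolding adj_def using y by auto
      qed
      thus "w \<in> walks F Q V n" using w unfolding S_def walks_def by auto
    qed
    have ext: "\<exists>w'. w' \<in> S \<and> take (Suc j) w' = p"
      if p: "length p = Suc j" "Suc j \<le> n" "set p \<subseteq> V" "p ! 0 = a" "Iset F Q p x j \<noteq> {}" for p j
    proof -
      from extend[OF sys cov p(1) p(3) _ p(5), of "n - Suc j"] p(4) a(2)
      obtain w' where w': "length w' = Suc j + (n - Suc j)" "take (Suc j) w' = p" "set w' \<subseteq> V"
        "Iset F Q w' x (j + (n - Suc j)) \<noteq> {}" by auto
      have "w' ! 0 = a" using w'(2) p(4) by (metis nth_take zero_less_Suc)
      moreover have "j + (n - Suc j) = n - 1" using p(2) by simp
      ultimately show ?thesis using w' p(2) unfolding S_def by (intro exI[of _ w']) auto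
    qed
    have Sne: "S \<noteq> {}"
      using ext[of "[a]" 0] a n by auto
    have ap: "adm_point F Q n S x"
      unfolding adm_point_def
    proof (intro conjI ballI allI impI)
      show "x \<in> Q" by fact
      fix w assume w: "w \<in> S"
      have lw: "length w = n" and w0: "w ! 0 = a" and sV: "set w \<subseteq> V"
        and wn: "Iset F Q w x (n - 1) \<noteq> {}" using w unfolding S_def by auto
      show "Fimg F (Iset F Q w x (n - 1)) (w ! (n - 1)) \<subseteq> Q"
        using Iset_sub[OF xw[OF w], of "n - 1"] unfolding Fimg_def Qu_def by auto
      fix i assume i: "i < n - 1"
      have "Suc i \<le> n - 1" using i by simp
      from Iset_ne_mono[OF wn this] show "Iset F Q w x (Suc i) \<noteq> {}" .
      show "Fimg F (Iset F Q w x i) (w ! i)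
             \<subseteq> (\<Union>w'\<in>{w'\<in>S. take (Suc i) w' = take (Suc i) w}. Qu F Q (w' ! Suc i))"
      proof
        fix y assume "y \<in> Fimg F (Iset F Q w x i) (w ! i)"
        then obtain z where z: "z \<in> Iset F Q w x i" "y \<in> F z (w ! i)" unfolding Fimg_def by auto
        have "z \<in> Qu F Q (w ! i)" using Iset_sub[OF xw[OF w]] z by auto
        hence yQ: "y \<in> Q" using z unfolding Qu_def by auto
        with cov obtain b where b: "b \<in> V" "y \<in> Qu F Q b" unfolding is_cover_def by auto
        define p where "p = take (Suc i) w @ [b]"
        have lp: "length p = Suc (Suc i)" using lw i unfolding p_def by simp
        have tp: "take (Suc i) p = take (Suc i) w" using lw i unfolding p_def by simp
        have sp: "set p \<subseteq> V" using sV b unfolding p_def by (auto dest: in_set_takeD)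
        have p0: "p ! 0 = a" using w0 lw i unfolding p_def by (simp add: nth_append)
        have pi: "p ! i = w ! i" "p ! Suc i = b" using lw i unfolding p_def by (auto simp: nth_append)
        have Ip: "Iset F Q p x i = Iset F Q w x i" by (rule Iset_prefix[OF tp])
        have "y \<in> Iset F Q p x (Suc i)" using Ip pi z b by (auto simp: Fimg_def)
        hence "Iset F Q p x (Suc i) \<noteq> {}" by auto
        moreover have "Suc (Suc i) \<le> n" using i by simp
        ultimately obtain w' where w': "w' \<in> S" "take (Suc (Suc i)) w' = p" using ext[OF lp _ sp p0] by blast
        have t1: "take (Suc i) w' = take (Suc i) w" using w'(2) tp by (metis take_take min.absorb1 le_SucI order_refl)
        have "w' ! Suc i = b" using w'(2) pi(2) by (metis nth_take lessI)
        thus "y \<in> (\<Union>w'\<in>{w'\<in>S. take (Suc i) w' = take (Suc i) w}. Qu F Q (w' ! Suc i))"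
          using w'(1) t1 b by auto
      qed
    qed
    have "\<forall>w\<in>S. length w = n" "\<forall>w'\<in>S. \<forall>w''\<in>S. w' ! 0 = w'' ! 0" unfolding S_def by auto
    hence "admissible_family F Q n S"
      unfolding admissible_family_def using n Sne ap by blast
    moreover have "x \<in> QS F Q n S" using ap unfolding QS_def by auto
    ultimately show "x \<in> (\<Union>S\<in>{S. S \<subseteq> walks F Q V n \<and> admissible_family F Q n S}. QS F Q n S)"
      using SW by auto
  qed
qed

lemma g_lim:
  fixes D r :: real and d :: nat
  shows "(\<lambda>n::nat. log 2 D / real n + real d * (log 2 (real n) / real n) + log 2 r) \<longlonglongrightarrow> log 2 r"
proof -
  have a: "(\<lambda>n::nat. log 2 D / real n) \<longlonglongrightarrow> 0" by real_asymp
  have b: "(\<lambda>n::nat. log 2 (real n) / real n) \<longlonglongrightarrow> 0" by real_asymp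
  have "(\<lambda>n::nat. log 2 D / real n + real d * (log 2 (real n) / real n) + log 2 r) \<longlonglongrightarrow> 0 + real d * 0 + log 2 r"
    by (intro tendsto_intros a b)
  thus ?thesis by simp
qed

lemma r_inv_le:
  assumes "spanning F Q n SS" "finite SS"
  shows "r_inv F n Q \<le> enat (card SS)"
  unfolding r_inv_def using assms by (intro Inf_lower) auto

lemma term_le:
  assumes n: "n > 0" and r: "r_inv F n Q \<le> enat c" and cB: "real c \<le> B"
  shows "ereal (1 / real n) * elog2 (r_inv F n Q) \<le> ereal (log 2 B / real n)"
proof (cases "r_inv F n Q")
  case (enat p)
  show ?thesis
  proof (cases "p = 0")
    case True
    then show ?thesis using enat n by (simp add: elog2_def)
  next
    case False
    have "p \<le> c" using r enat by simp
    hence pB: "real p \<le> B" using cB by linarith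
    have "log 2 (real p) \<le> log 2 B" using False pB by (subst log_le_cancel_iff) auto
    hence "log 2 (real p) / real n \<le> log 2 B / real n" using n by (simp add: divide_right_mono)
    then show ?thesis using enat False n by (simp add: elog2_def)
  qed
next
  case infinity
  then show ?thesis using r by simp
qed

lemma h_bound:
  assumes sys: "is_system F" and cov: "is_cover F Q V" and V: "finite V" and Vne: "V \<noteq> {}"
    and r: "r > 0" and sr: "spectral_radius (adm_matrix F Q V) \<le> r"
  shows "h_inv F Q \<le> ereal (log 2 r)"
proof -
  define k where "k = card V"
  have k: "k > 0" using V Vne unfolding k_def by (simp add: card_gt_0_iff)
  define e where "e = (SOME e. bij_betw e {..<card V} V)"
  have e: "bij_betw e {..<k} V"
    unfolding e_def k_def using ex_bij_betw_nat_finite[OF V] by (metis someI_ex lessThan_atLeast0)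
  define M where "M = (\<lambda>l j. if adj F Q (e l) (e j) then 1 else 0 :: nat)"
  define A where "A = adm_matrix F Q V"
  have fe: "(\<lambda>(i,j). adm_entry F Q (e i) (e j)) = (\<lambda>(i,j). if M i j = 1 then (1::complex) else 0)"
    by (auto simp: fun_eq_iff adm_entry_def adj_def M_def)
  have "A = mat k k (\<lambda>(i,j). adm_entry F Q (e i) (e j))"
    unfolding A_def adm_matrix_def Let_def e_def k_def by simp
  hence Aeq: "A = mat k k (\<lambda>(i,j). if M i j = 1 then (1::complex) else 0)"
    unfolding fe .
  have Ac: "A \<in> carrier_mat k k" using Aeq by simp
  have M01: "\<And>i j. M i j \<le> 1" unfolding M_def by simp
  from mat_pow_bound[OF Ac k r sr[folded A_def]] obtain c1 c2 where
    cc: "\<And>m i j. i < k \<Longrightarrow> j < k \<Longrightarrow> norm ((A ^\<^sub>m m) $$ (i,j)) \<le> r ^ m * (c1 + c2 * real m ^ (k - 1))"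
    by blast
  define d where "d = k - 1"
  define C where "C = real k * real k * (\<bar>c1\<bar> + \<bar>c2\<bar>) + 1"
  define D where "D = C / r"
  have Cpos: "C > 0" unfolding C_def by (simp add: add_nonneg_pos)
  have Dpos: "D > 0" unfolding D_def using Cpos r by simp
  have card_bd: "real (card (walks F Q V n)) \<le> D * r ^ n * real n ^ d" if n: "n > 0" for n
  proof -
    obtain m where m: "n = Suc m" using n by (cases n) auto
    have "real (card (walks F Q V (Suc m))) \<le> real (\<Sum>i<k. \<Sum>j<k. cnt M k m i j)"
    proof -
      have Me: "\<And>l j. M l j = (if adj F Q (e l) (e j) then 1 else 0)" by (simp add: M_def)
      have "card (walks F Q V (Suc m)) \<le> (\<Sum>i<k. \<Sum>j<k. cnt M k m i j)"
        by (rule card_walks[OF V e Me])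
      thus ?thesis by (simp only: of_nat_le_iff)
    qed
    also have "\<dots> = (\<Sum>i<k. \<Sum>j<k. norm ((A ^\<^sub>m m) $$ (i,j)))"
      by (simp add: cnt_mat[OF Aeq M01])
    also have "\<dots> \<le> (\<Sum>i<k. \<Sum>j<k. r ^ m * (c1 + c2 * real m ^ d))"
      unfolding d_def by (intro sum_mono cc) auto
    also have "\<dots> = real k * real k * (r ^ m * (c1 + c2 * real m ^ d))" by simp
    also have "\<dots> \<le> real k * real k * (r ^ m * ((\<bar>c1\<bar> + \<bar>c2\<bar>) * real n ^ d))"
    proof -
      have p1: "1 \<le> real n ^ d" using n by simp
      have p2: "real m ^ d \<le> real n ^ d" using m by (intro power_mono) auto
      have "c1 \<le> \<bar>c1\<bar> * real n ^ d" using p1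
        by (metis abs_ge_self abs_ge_zero mult.right_neutral mult_left_mono order_trans)
      moreover have "c2 * real m ^ d \<le> \<bar>c2\<bar> * real n ^ d"
        using p2 by (metis abs_ge_self abs_ge_zero mult_mono order_trans zero_le_power of_nat_0_le_iff abs_mult abs_le_iff mult_right_mono)
      ultimately have "c1 + c2 * real m ^ d \<le> (\<bar>c1\<bar> + \<bar>c2\<bar>) * real n ^ d" by (simp add: distrib_right)
      thus ?thesis using r by (intro mult_left_mono) auto
    qed
    also have "\<dots> \<le> C * r ^ m * real n ^ d"
    proof -
      have "real k * real k * ((\<bar>c1\<bar> + \<bar>c2\<bar>) * real n ^ d) \<le> C * real n ^ d"
        unfolding C_def by (simp add: algebra_simps)
      hence "r ^ m * (real k * real k * ((\<bar>c1\<bar> + \<bar>c2\<bar>) * real n ^ d)) \<le> r ^ m * (C * real n ^ d)"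
        using r by (intro mult_left_mono) auto
      thus ?thesis by (simp add: algebra_simps)
    qed
    also have "\<dots> = D * r ^ n * real n ^ d" unfolding D_def m using r by (simp add: field_simps)
    finally show ?thesis using m by simp
  qed
  define g where "g = (\<lambda>n::nat. log 2 D / real n + real d * (log 2 (real n) / real n) + log 2 r)"
  have ev: "eventually (\<lambda>n. ereal (1 / real n) * elog2 (r_inv F n Q) \<le> ereal (g n)) sequentially"
    using eventually_gt_at_top[of 0]
  proof eventually_elim
    case (elim n)
    have ri: "r_inv F n Q \<le> enat (card (walks F Q V n))"
      by (rule r_inv_le[OF spanning_walks[OF sys cov elim] finite_walks[OF V]])
    have "ereal (1 / real n) * elog2 (r_inv F n Q) \<le> ereal (log 2 (D * r ^ n * real n ^ d) / real n)"
      by (rule term_le[OF elim ri card_bd[OF elim]])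
    also have "log 2 (D * r ^ n * real n ^ d) / real n = g n"
    proof -
      have L: "log 2 (D * r ^ n * real n ^ d) = log 2 D + real n * log 2 r + real d * log 2 (real n)"
        using Dpos r elim by (simp add: log_mult log_nat_power)
      have nz: "real n \<noteq> 0" using elim by simp
      have "(log 2 D + real n * log 2 r + real d * log 2 (real n)) / real n
          = log 2 D / real n + real d * (log 2 (real n) / real n) + log 2 r"
        using nz by (simp add: add_divide_distrib)
      thus ?thesis unfolding g_def L .
    qed
    finally show ?case .
  qed
  have "h_inv F Q \<le> limsup (\<lambda>n. ereal (g n))"
    unfolding h_inv_def by (rule Limsup_mono[OF ev])
  also have "limsup (\<lambda>n. ereal (g n)) = ereal (log 2 r)"
    by (rule lim_imp_Limsup) (use g_lim[of D d r] in \<open>auto simp: g_def\<close>)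
  finally show ?thesis .
qed

lemma h_empty:
  fixes F :: "'x \<Rightarrow> 'u \<Rightarrow> 'x set"
  shows "h_inv F {} = -\<infinity>"
proof -
  have "r_inv F n {} \<le> enat (card ({} :: 'u list set))" for n
    by (rule r_inv_le) (auto simp: spanning_def)
  hence r0: "r_inv F n {} = 0" for n by (simp add: zero_enat_def[symmetric])
  have "h_inv F {} \<le> ereal t" for t
  proof -
    have "eventually (\<lambda>n. ereal (1 / real n) * elog2 (r_inv F n {}) \<le> ereal t) sequentially"
      using eventually_gt_at_top[of 0]
      by eventually_elim (simp add: r0 elog2_def zero_enat_def)
    hence "h_inv F {} \<le> limsup (\<lambda>n. ereal t)" unfolding h_inv_def by (rule Limsup_mono)
    thus ?thesis by (simp add: Limsup_const)
  qed
  thus ?thesis by (rule ereal_bot)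
qed

theorem proposition3p8:
  fixes F :: "'x \<Rightarrow> 'u \<Rightarrow> 'x set" and Q :: "'x set" and V :: "'u set"
  assumes "is_system F"
    and "controlled_invariant F Q"
    and "finite V"
    and "is_cover F Q V"
  shows "h_inv F Q \<le> rlog2 (spectral_radius (adm_matrix F Q V))"
proof (cases "Q = {}")
  case True
  have "h_inv F Q = -\<infinity>" using True h_empty[of F] by simp
  then show ?thesis by simp
next
  case False
  hence Vne: "V \<noteq> {}" using assms(4) unfolding is_cover_def by auto
  let ?A = "adm_matrix F Q V"
  have Ac: "?A \<in> carrier_mat (card V) (card V)" unfolding adm_matrix_def Let_def by simp
  have k: "card V > 0" using assms(3) Vne by (simp add: card_gt_0_iff)
  have nn: "spectral_radius ?A \<ge> 0" using spectral_radius_mem_max(1)[OF Ac k] by auto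
  show ?thesis
  proof (cases "spectral_radius ?A = 0")
    case False
    hence pos: "spectral_radius ?A > 0" using nn by simp
    have "h_inv F Q \<le> ereal (log 2 (spectral_radius ?A))"
      by (rule h_bound[OF assms(1) assms(4) assms(3) Vne pos order_refl])
    thus ?thesis using False by (simp add: rlog2_def)
  next
    case True
    have "h_inv F Q \<le> ereal t" for t
    proof -
      have "h_inv F Q \<le> ereal (log 2 (2 powr t))"
        by (rule h_bound[OF assms(1) assms(4) assms(3) Vne]) (use True in auto)
      thus ?thesis by simp
    qed
    hence "h_inv F Q = -\<infinity>" by (rule ereal_bot)
    thus ?thesis by simp
  qed
qed

end
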